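(* Under the AOA-gs sampling rule, the best alternative eventually always belongs to the estimated good enough subset: almost surely there exists $t_0$ such that $\langle 1\rangle\in\widehat{\mathcal F}_t^m$ for all $t\ge t_0$.
   Context: There are $k\ge2$ alternatives and an integer $1\le m<k$. Alternative $h$ produces i.i.d. samples $X_{h,1},X_{h,2},\dots\sim N(\mu_h,\sigma_h^2)$, independent across alternatives, with $\sigma_h>0$ known and the true means $\mu_1,\dots,\mu_k$ pairwise distinct; $\langle 1\rangle$ is the index of the largest true mean. Independent conjugate priors $\mu_h\sim N(\mu_h^{(0)},(\sigma_h^{(0)})^2)$ are used. If after $t$ total samples alternative $h$ has received $t_h$ samples with sample mean $m_h^{(t)}$, its posterior is $N(\mu_h^{(t)},(\sigma_h^{(t)})^2)$ with $(\sigma_h^{(t)})^2=\big(1/(\sigma_h^{(0)})^2+t_h/\sigma_h^2\big)^{-1}$ and $\mu_h^{(t)}=(\sigma_h^{(t)})^2\big(\mu_h^{(0)}/(\sigma_h^{(0)})^2+t_h m_h^{(t)}/\sigma_h^2\big)$. Let $\langle 1\rangle_t,\dots,\langle k\rangle_t$ order the alternatives by decreasing posterior mean, $\widehat{\mathcal F}_t^m=\{\langle1\rangle_t,\dots,\langle m\rangle_t\}$ and $\widehat{\mathcal F}_t^{k-m}=\{\langle m+1\rangle_t,\dots,\langle k\rangle_t\}$. AOA-gs rule: after an initial stage giving each alternative $n_0\ge1$ samples, at each step $t$ and for each candidate $a\in\{1,\dots,k\}$ set $s_h^2(a)=(\sigma_h^{(t)})^2$ for $h\ne a$ and $s_a^2(a)=\big(1/(\sigma_a^{(0)})^2+(t_a+1)/\sigma_a^2\big)^{-1}$,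 and compute $$\widehat V_t(a)=\max_{i\in\widehat{\mathcal F}_t^m}\ \min_{j\in\widehat{\mathcal F}_t^{k-m}}\frac{(\mu_i^{(t)}-\mu_j^{(t)})^2}{s_i^2(a)+s_j^2(a)};$$ the next sample is drawn (from the true distribution) for an alternative $a$ maximizing $\widehat V_t(a)$. *)

theory Defs
  imports "HOL-Probability.Probability"
begin

text \<open>Alternatives are indexed 0..<k. X h i w is the i-th sample (i = 0,1,...) of alternative h.\<close>

text \<open>Posterior variance after n samples, prior sd s0, sampling sd s.\<close>
definition post_var :: "real \<Rightarrow> real \<Rightarrow> nat \<Rightarrow> real" where
  "post_var s0 s n = inverse (1 / s0\<^sup>2 + real n / s\<^sup>2)"

text \<open>Posterior mean after n samples with sample sum S (so S = n * sample mean).\<close>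
definition post_mean :: "real \<Rightarrow> real \<Rightarrow> real \<Rightarrow> nat \<Rightarrow> real \<Rightarrow> real" where
  "post_mean mu0 s0 s n S = post_var s0 s n * (mu0 / s0\<^sup>2 + S / s\<^sup>2)"

text \<open>Estimated top-m set: alternatives ordered by decreasing posterior mean pm,
  ties broken by smaller index first; the first m of them.\<close>
definition top_set :: "nat \<Rightarrow> nat \<Rightarrow> (nat \<Rightarrow> real) \<Rightarrow> nat set" where
  "top_set k m pm = {i. i < k \<and>
     card {j. j < k \<and> (pm i < pm j \<or> (pm j = pm i \<and> j < i))} < m}"

definition bot_set :: "nat \<Rightarrow> nat \<Rightarrow> (nat \<Rightarrow> real) \<Rightarrow> nat set" where
  "bot_set k m pm = {..<k} - top_set k m pm"

definition V_val :: "nat \<Rightarrow> nat \<Rightarrow> (nat \<Rightarrow> real) \<Rightarrow> (nat \<Rightarrow> real) \<Rightarrow> real" where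
  "V_val k m pm sv = Max ((\<lambda>i. Min ((\<lambda>j. (pm i - pm j)\<^sup>2 / (sv i + sv j)) ` bot_set k m pm))
                          ` top_set k m pm)"

definition pmeans :: "(nat \<Rightarrow> real) \<Rightarrow> (nat \<Rightarrow> real) \<Rightarrow> (nat \<Rightarrow> real) \<Rightarrow>
    (nat \<Rightarrow> nat \<Rightarrow> 'w \<Rightarrow> real) \<Rightarrow> 'w \<Rightarrow> (nat \<Rightarrow> nat) \<Rightarrow> nat \<Rightarrow> real" where
  "pmeans mu0 s0 s X w c h = post_mean (mu0 h) (s0 h) (s h) (c h) (\<Sum>i<c h. X h i w)"

definition Vhat :: "nat \<Rightarrow> nat \<Rightarrow> (nat \<Rightarrow> real) \<Rightarrow> (nat \<Rightarrow> real) \<Rightarrow> (nat \<Rightarrow> real) \<Rightarrow>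
    (nat \<Rightarrow> nat \<Rightarrow> 'w \<Rightarrow> real) \<Rightarrow> 'w \<Rightarrow> (nat \<Rightarrow> nat) \<Rightarrow> nat \<Rightarrow> real" where
  "Vhat k m mu0 s0 s X w c a = V_val k m (pmeans mu0 s0 s X w c)
      (\<lambda>h. if h = a then post_var (s0 h) (s h) (c h + 1) else post_var (s0 h) (s h) (c h))"

text \<open>Sample counts after the initial stage (n0 each) and r further AOA-gs steps.
  pick r V is the (arbitrary) tie-breaking selection of a maximiser of V at step r.\<close>
primrec aoa_counts :: "nat \<Rightarrow> nat \<Rightarrow> nat \<Rightarrow> (nat \<Rightarrow> real) \<Rightarrow> (nat \<Rightarrow> real) \<Rightarrow> (nat \<Rightarrow> real) \<Rightarrow>
    (nat \<Rightarrow> nat \<Rightarrow> 'w \<Rightarrow> real) \<Rightarrow> (nat \<Rightarrow> (nat \<Rightarrow> real) \<Rightarrow> nat) \<Rightarrow> 'w \<Rightarrow> nat \<Rightarrow> (nat \<Rightarrow> nat)" where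
  "aoa_counts k m n0 mu0 s0 s X pick w 0 = (\<lambda>h. n0)"
| "aoa_counts k m n0 mu0 s0 s X pick w (Suc r) =
    (let c = aoa_counts k m n0 mu0 s0 s X pick w r;
         a = pick r (Vhat k m mu0 s0 s X w c)
     in c(a := c a + 1))"

end

theory Submission
  imports Defs "HOL-Real_Asymp.Real_Asymp"
begin
lemma top_sep:
  assumes inj: "inj_on L {..<k}" and i: "i \<in> top_set k m L" and j: "j < k" "j \<notin> top_set k m L"
  shows "L j < L i"
proof (rule ccontr)
  assume "\<not> L j < L i"
  have ik: "i < k" using i by (simp add: top_set_def)
  have "i \<noteq> j" using i j by auto
  hence lt: "L i < L j" using \<open>\<not> L j < L i\<close> inj ik j by (metis inj_on_def lessThan_iff linorder_neqE_linordered_idom)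
  let ?A = "{h. h < k \<and> (L j < L h \<or> (L h = L j \<and> h < j))}"
  let ?B = "{h. h < k \<and> (L i < L h \<or> (L h = L i \<and> h < i))}"
  have "?A \<subset> ?B"
  proof
    show "?A \<subseteq> ?B"
    proof
      fix h assume "h \<in> ?A"
      hence hk: "h < k" and "L j < L h \<or> (L h = L j \<and> h < j)" by auto
      hence "L j < L h \<or> h = j" using inj j by (metis inj_on_def lessThan_iff less_irrefl)
      thus "h \<in> ?B" using lt hk by auto
    qed
    show "?A \<noteq> ?B" using lt j by auto
  qed
  hence "card ?A < card ?B" by (intro psubset_card_mono) auto
  also have "card ?B < m" using i by (simp add: top_set_def)
  finally have "j \<in> top_set k m L" using j by (simp add: top_set_def)
  thus False using j by simp
qed

lemma top_nonempty:
  assumes "inj_on L {..<k}" "1 \<le> m" "0 < k"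
  shows "\<exists>i. i \<in> top_set k m L"
proof -
  have "Max (L ` {..<k}) \<in> L ` {..<k}" using assms by (intro Max_in) auto
  then obtain i where i: "i < k" "L i = Max (L ` {..<k})" by auto
  have le: "\<And>h. h < k \<Longrightarrow> L h \<le> L i" using i by simp
  have "{h. h < k \<and> (L i < L h \<or> (L h = L i \<and> h < i))} = {}"
  proof -
    { fix h assume h: "h < k" "L i < L h \<or> (L h = L i \<and> h < i)"
      have False
      proof (cases "L i < L h")
        case True thus False using le[OF h(1)] by simp
      next
        case False
        hence "L h = L i" "h < i" using h by auto
        thus False using assms(1) h(1) i(1) unfolding inj_on_def by auto
      qed }
    thus ?thesis by blast
  qed
  hence "card {h. h < k \<and> (L i < L h \<or> (L h = L i \<and> h < i))} < m" using assms by (simp only: card.empty)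
  hence "i \<in> top_set k m L" using i(1) unfolding top_set_def by blast
  thus ?thesis by blast
qed

lemma bot_nonempty:
  assumes "inj_on L {..<k}" "m < k"
  shows "\<exists>j. j < k \<and> j \<notin> top_set k m L"
proof -
  have "Min (L ` {..<k}) \<in> L ` {..<k}" using assms by (intro Min_in) auto
  then obtain j where j: "j < k" "L j = Min (L ` {..<k})" by auto
  have le: "\<And>h. h < k \<Longrightarrow> L j \<le> L h" using j by simp
  have "{..<k} - {j} \<subseteq> {h. h < k \<and> (L j < L h \<or> (L h = L j \<and> h < j))}"
  proof
    fix h assume h: "h \<in> {..<k} - {j}"
    hence "L h \<noteq> L j" using assms(1) j(1) unfolding inj_on_def by auto
    hence "L j < L h" using le[of h] h by auto
    thus "h \<in> {h. h < k \<and> (L j < L h \<or> (L h = L j \<and> h < j))}" using h by auto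
  qed
  hence "card ({..<k} - {j}) \<le> card {h. h < k \<and> (L j < L h \<or> (L h = L j \<and> h < j))}"
    by (intro card_mono) auto
  moreover have "card ({..<k} - {j}) = k - 1" using j by simp
  ultimately have "\<not> card {h. h < k \<and> (L j < L h \<or> (L h = L j \<and> h < j))} < m"
    using assms by linarith
  thus ?thesis using j by (auto simp: top_set_def)
qed

lemma top_set_cong:
  assumes "\<And>i j. i < k \<Longrightarrow> j < k \<Longrightarrow> (p i < p j \<longleftrightarrow> q i < q j) \<and> (p i = p j \<longleftrightarrow> q i = q j)"
  shows "top_set k m p = top_set k m q"
proof -
  have "\<And>i. i < k \<Longrightarrow> {j. j < k \<and> (p i < p j \<or> (p j = p i \<and> j < i))} = {j. j < k \<and> (q i < q j \<or> (q j = q i \<and> j < i))}"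
    using assms by blast
  thus ?thesis unfolding top_set_def by (auto intro!: Collect_cong)
qed

definition PMw :: "(nat \<Rightarrow> real) \<Rightarrow> (nat \<Rightarrow> real) \<Rightarrow> (nat \<Rightarrow> real) \<Rightarrow> (nat \<Rightarrow> nat \<Rightarrow> 'w \<Rightarrow> real) \<Rightarrow> 'w \<Rightarrow> nat \<Rightarrow> nat \<Rightarrow> real"
  where "PMw mu0 s0 s X w h n = post_mean (mu0 h) (s0 h) (s h) n (\<Sum>i<n. X h i w)"

definition PVw :: "(nat \<Rightarrow> real) \<Rightarrow> (nat \<Rightarrow> real) \<Rightarrow> nat \<Rightarrow> nat \<Rightarrow> real"
  where "PVw s0 s h n = post_var (s0 h) (s h) n"

definition Vfun :: "nat set \<Rightarrow> nat set \<Rightarrow> (nat \<Rightarrow> nat \<Rightarrow> real) \<Rightarrow> real"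
  where "Vfun T B f = Max ((\<lambda>i. Min ((\<lambda>j. f i j) ` B)) ` T)"

lemma Vfun_less:
  assumes "finite T" "finite B" "T \<noteq> {}" "\<And>i. i \<in> T \<Longrightarrow> \<exists>j\<in>B. f i j < \<theta>"
  shows "Vfun T B f < \<theta>"
proof -
  have "\<And>i. i \<in> T \<Longrightarrow> Min ((\<lambda>j. f i j) ` B) < \<theta>"
  proof -
    fix i assume i: "i \<in> T"
    then obtain j where "j \<in> B" "f i j < \<theta>" using assms(4) by blast
    moreover have "Min ((\<lambda>j. f i j) ` B) \<le> f i j" using \<open>j \<in> B\<close> assms(2) by (intro Min_le) auto
    ultimately show "Min ((\<lambda>j. f i j) ` B) < \<theta>" by linarith
  qed
  thus ?thesis unfolding Vfun_def using assms(1,3) by (subst Max_less_iff) auto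
qed

lemma Vfun_greater:
  assumes "finite T" "finite B" "B \<noteq> {}" "i \<in> T" "\<And>j. j \<in> B \<Longrightarrow> \<theta> < f i j"
  shows "\<theta> < Vfun T B f"
proof -
  have "\<theta> < Min ((\<lambda>j. f i j) ` B)" using assms(2,3,5) by (subst Min_gr_iff) auto
  also have "\<dots> \<le> Vfun T B f" unfolding Vfun_def using assms(1,4) by (intro Max_ge) auto
  finally show ?thesis .
qed

lemma post_var_pos: "s0 > 0 \<Longrightarrow> s > 0 \<Longrightarrow> post_var s0 s n > 0"
  unfolding post_var_def by (simp add: add_pos_nonneg)

lemma post_var_Suc_less: "s0 > 0 \<Longrightarrow> s > 0 \<Longrightarrow> post_var s0 s (Suc n) < post_var s0 s n"
  unfolding post_var_def
  by (rule less_imp_inverse_less) (auto simp: add_pos_nonneg divide_strict_right_mono)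

lemma post_var_lim: "s0 > 0 \<Longrightarrow> s > 0 \<Longrightarrow> (\<lambda>n. post_var s0 s n) \<longlonglongrightarrow> 0"
  unfolding post_var_def by real_asymp

lemma post_mean_lim:
  assumes "s0 > 0" "s > 0" "(\<lambda>n. S n / real n) \<longlonglongrightarrow> \<mu>"
  shows "(\<lambda>n. post_mean m0 s0 s n (S n)) \<longlonglongrightarrow> \<mu>"
proof -
  have ev: "eventually (\<lambda>n. (m0 / s0\<^sup>2 * inverse (real n) + (S n / real n) / s\<^sup>2) /
          (1 / s0\<^sup>2 * inverse (real n) + 1 / s\<^sup>2) = post_mean m0 s0 s n (S n)) sequentially"
    unfolding eventually_sequentially
  proof (intro exI allI impI)
    fix n :: nat assume "1 \<le> n"
    hence n: "real n > 0" by simp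
    show "(m0 / s0\<^sup>2 * inverse (real n) + (S n / real n) / s\<^sup>2) /
          (1 / s0\<^sup>2 * inverse (real n) + 1 / s\<^sup>2) = post_mean m0 s0 s n (S n)"
    proof -
      have "post_mean m0 s0 s n (S n) = (m0 / s0\<^sup>2 + S n / s\<^sup>2) / (1 / s0\<^sup>2 + real n / s\<^sup>2)"
        unfolding post_mean_def post_var_def by (simp add: divide_inverse mult.commute)
      also have "\<dots> = ((m0 / s0\<^sup>2) * inverse (real n) + (S n / s\<^sup>2) * inverse (real n)) / ((1 / s0\<^sup>2) * inverse (real n) + (real n / s\<^sup>2) * inverse (real n))"
        using n by (subst mult_divide_mult_cancel_right[symmetric, of "inverse (real n)"]) (auto simp: distrib_right)
      also have "(S n / s\<^sup>2) * inverse (real n) = (S n / real n) / s\<^sup>2" by (simp add: divide_inverse)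
      also have "(real n / s\<^sup>2) * inverse (real n) = 1 / s\<^sup>2" using n by (simp add: divide_inverse)
      finally show ?thesis by simp
    qed
  qed
  have "(\<lambda>n. (m0 / s0\<^sup>2 * inverse (real n) + (S n / real n) / s\<^sup>2) /
          (1 / s0\<^sup>2 * inverse (real n) + 1 / s\<^sup>2)) \<longlonglongrightarrow> (m0 / s0\<^sup>2 * 0 + \<mu> / s\<^sup>2) / (1 / s0\<^sup>2 * 0 + 1 / s\<^sup>2)"
    using assms by (intro tendsto_intros lim_inverse_n) auto
  moreover have "(m0 / s0\<^sup>2 * 0 + \<mu> / s\<^sup>2) / (1 / s0\<^sup>2 * 0 + 1 / s\<^sup>2) = \<mu>" using assms by simp
  ultimately show ?thesis using tendsto_cong[OF ev] by simp
qed

lemma Q_inf: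
  fixes f g :: "nat \<Rightarrow> real"
  assumes "f \<longlonglongrightarrow> a" "a > 0" "g \<longlonglongrightarrow> 0" "eventually (\<lambda>r. g r > 0) sequentially"
  shows "eventually (\<lambda>r. \<theta> < f r / g r) sequentially"
proof -
  define t where "t = \<bar>\<theta>\<bar> + 1"
  have t: "t > 0" "\<theta> < t" unfolding t_def by auto
  have e1: "eventually (\<lambda>r. a / 2 < f r) sequentially" using assms(1,2) by (intro order_tendstoD(1)) auto
  have e2: "eventually (\<lambda>r. g r < a / (2 * t)) sequentially" using assms(2,3) t by (intro order_tendstoD(2)) auto
  show ?thesis using e1 e2 assms(4)
  proof eventually_elim
    case (elim r)
    have "t * g r < a / 2" using elim(2) t by (simp add: field_simps)
    also have "\<dots> < f r" by fact
    finally have "t < f r / g r" using elim(3) by (simp add: field_simps)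
    thus ?case using t by linarith
  qed
qed

locale det =
  fixes k m n0 :: nat and mu sigma mu0 sigma0 :: "nat \<Rightarrow> real" and X :: "nat \<Rightarrow> nat \<Rightarrow> 'w \<Rightarrow> real"
    and pick :: "nat \<Rightarrow> (nat \<Rightarrow> real) \<Rightarrow> nat" and best :: nat and w :: 'w
  assumes k2: "2 \<le> k" and m1: "1 \<le> m" and mk: "m < k" and n01: "1 \<le> n0"
    and sig: "\<And>h. h < k \<Longrightarrow> sigma h > 0" and sig0: "\<And>h. h < k \<Longrightarrow> sigma0 h > 0"
    and mu_inj: "\<And>h h'. h < k \<Longrightarrow> h' < k \<Longrightarrow> h \<noteq> h' \<Longrightarrow> mu h \<noteq> mu h'"
    and best: "best < k" "\<And>h. h < k \<Longrightarrow> mu h \<le> mu best"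
    and pick: "\<And>r V. pick r V < k \<and> (\<forall>a<k. V a \<le> V (pick r V))"
    and H1: "\<And>h. h < k \<Longrightarrow> (\<lambda>n. (\<Sum>i<n. X h i w) / real n) \<longlonglongrightarrow> mu h"
    and H2: "\<And>h h' n n'. h < k \<Longrightarrow> h' < k \<Longrightarrow> h \<noteq> h' \<Longrightarrow> 1 \<le> n \<Longrightarrow> 1 \<le> n' \<Longrightarrow>
               PMw mu0 sigma0 sigma X w h n \<noteq> PMw mu0 sigma0 sigma X w h' n'"
    and H3: "\<And>h h' n. h < k \<Longrightarrow> h' < k \<Longrightarrow> 1 \<le> n \<Longrightarrow> PMw mu0 sigma0 sigma X w h n \<noteq> mu h'"
    and H4: "\<And>i j j' n n'. i < k \<Longrightarrow> j < k \<Longrightarrow> j' < k \<Longrightarrow> j \<noteq> j' \<Longrightarrow> 1 \<le> n \<Longrightarrow> 1 \<le> n' \<Longrightarrow>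
               (mu i - PMw mu0 sigma0 sigma X w j n)\<^sup>2 * PVw sigma0 sigma j' n' \<noteq>
               (mu i - PMw mu0 sigma0 sigma X w j' n')\<^sup>2 * PVw sigma0 sigma j n"
begin

abbreviation "c r \<equiv> aoa_counts k m n0 mu0 sigma0 sigma X pick w r"
abbreviation "PM \<equiv> PMw mu0 sigma0 sigma X w"
abbreviation "PV \<equiv> PVw sigma0 sigma"
abbreviation "Vh r \<equiv> Vhat k m mu0 sigma0 sigma X w (c r)"
abbreviation "a r \<equiv> pick r (Vh r)"
definition "sv r b h = (if h = b then PV h (c r h + 1) else PV h (c r h))"
definition "Q r b i j = (PM i (c r i) - PM j (c r j))\<^sup>2 / (sv r b i + sv r b j)"

lemma c_Suc: "c (Suc r) = (c r)(a r := c r (a r) + 1)"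
  by (simp add: Let_def)

lemma a_lt: "a r < k" using pick by blast

lemma a_max: "b < k \<Longrightarrow> Vh r b \<le> Vh r (a r)" using pick by blast

lemma c_mono1: "c r h \<le> c (Suc r) h"
  unfolding c_Suc by simp

lemma c_incseq: "incseq (\<lambda>r. c r h)"
  using c_mono1 by (intro incseq_SucI) auto

lemma c_ge: "n0 \<le> c r h"
proof (induction r)
  case 0 thus ?case by simp
next
  case (Suc r) thus ?case using c_mono1[of r h] by linarith
qed

lemma PV_pos: "h < k \<Longrightarrow> PV h n > 0"
  unfolding PVw_def using sig sig0 by (intro post_var_pos) auto

lemma PV_Suc: "h < k \<Longrightarrow> PV h (Suc n) < PV h n"
  unfolding PVw_def using sig sig0 by (intro post_var_Suc_less) auto

lemma PV_lim: "h < k \<Longrightarrow> (\<lambda>n. PV h n) \<longlonglongrightarrow> 0"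
  unfolding PVw_def using sig sig0 by (intro post_var_lim) auto

lemma PM_lim: "h < k \<Longrightarrow> (\<lambda>n. PM h n) \<longlonglongrightarrow> mu h"
  unfolding PMw_def using sig sig0 H1 by (intro post_mean_lim) auto

lemma Vh_eq: "Vh r b = V_val k m (\<lambda>h. PM h (c r h)) (sv r b)"
  unfolding Vhat_def pmeans_def PMw_def sv_def PVw_def by (simp add: fun_eq_iff)

definition "bnd h = (\<exists>B. \<forall>r. c r h \<le> B)"
definition "Sset = {h. h < k \<and> \<not> bnd h}"
definition "Uset = {h. h < k \<and> bnd h}"
definition "Cf h = (SOME C. eventually (\<lambda>r. c r h = C) sequentially)"

lemma bnd_ev: assumes "bnd h" shows "eventually (\<lambda>r. c r h = Cf h) sequentially"
proof -
  obtain B where B: "\<And>r. c r h \<le> B" using assms unfolding bnd_def by blast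
  have "range (\<lambda>r. c r h) \<subseteq> {..B}" using B by auto
  hence fin: "finite (range (\<lambda>r. c r h))" using finite_subset by blast
  have "range (\<lambda>r. c r h) \<noteq> {}" by simp
  hence "Max (range (\<lambda>r. c r h)) \<in> range (\<lambda>r. c r h)" using fin by (intro Max_in)
  then obtain r0 where r0: "c r0 h = Max (range (\<lambda>r. c r h))" by auto
  have "eventually (\<lambda>r. c r h = c r0 h) sequentially"
    unfolding eventually_sequentially
  proof (intro exI allI impI)
    fix r assume "r0 \<le> r"
    hence "c r0 h \<le> c r h" using c_incseq[of h] by (simp add: incseq_def)
    moreover have "c r h \<le> c r0 h" unfolding r0 using fin by (intro Max_ge) auto
    ultimately show "c r h = c r0 h" by simp
  qed
  hence "\<exists>C. eventually (\<lambda>r. c r h = C) sequentially" by blast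
  thus ?thesis unfolding Cf_def by (rule someI_ex)
qed

lemma unbnd_lim: assumes "\<not> bnd h" shows "filterlim (\<lambda>r. c r h) at_top sequentially"
  unfolding filterlim_at_top
proof
  fix Z :: nat
  have "\<not> (\<forall>r. c r h \<le> Z)" using assms unfolding bnd_def by blast
  then obtain r0 where "\<not> c r0 h \<le> Z" by blast
  hence "Z < c r0 h" by simp
  thus "eventually (\<lambda>r. Z \<le> c r h) sequentially"
    unfolding eventually_sequentially
  proof (intro exI allI impI)
    fix r assume "r0 \<le> r"
    hence "c r0 h \<le> c r h" using c_incseq[of h] by (simp add: incseq_def)
    thus "Z \<le> c r h" using \<open>Z < c r0 h\<close> by linarith
  qed
qed

lemma Cf_ge: assumes "bnd h" shows "1 \<le> Cf h"
proof -
  obtain r where "c r h = Cf h" using eventually_happens'[OF _ bnd_ev[OF assms]] by auto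
  thus ?thesis using c_ge[of r h] n01 by linarith
qed

lemma ev_U: "eventually (\<lambda>r. \<forall>h\<in>Uset. c r h = Cf h) sequentially"
  by (rule eventually_ball_finite) (auto simp: Uset_def intro: bnd_ev)

lemma ev_aS: "eventually (\<lambda>r. a r \<in> Sset) sequentially"
proof -
  have "eventually (\<lambda>r. (\<forall>h\<in>Uset. c r h = Cf h) \<and> (\<forall>h\<in>Uset. c (Suc r) h = Cf h)) sequentially"
  proof (rule eventually_conj[OF ev_U])
    show "eventually (\<lambda>r. \<forall>h\<in>Uset. c (Suc r) h = Cf h) sequentially"
      using eventually_sequentially_Suc[of "\<lambda>r. \<forall>h\<in>Uset. c r h = Cf h"] ev_U by blast
  qed
  thus ?thesis
  proof eventually_elim
    case (elim r)
    show "a r \<in> Sset"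
    proof (rule ccontr)
      assume "a r \<notin> Sset"
      hence "a r \<in> Uset" using a_lt[of r] unfolding Sset_def Uset_def by blast
      hence "c r (a r) = Cf (a r)" "c (Suc r) (a r) = Cf (a r)" using elim by blast+
      moreover have "c (Suc r) (a r) = c r (a r) + 1" unfolding c_Suc by simp
      ultimately show False by linarith
    qed
  qed
qed

definition "L h = (if h \<in> Sset then mu h else PM h (Cf h))"

lemma L_lim: assumes "h < k" shows "(\<lambda>r. PM h (c r h)) \<longlonglongrightarrow> L h"
proof (cases "h \<in> Sset")
  case True
  hence "filterlim (\<lambda>r. c r h) at_top sequentially" using unbnd_lim unfolding Sset_def by blast
  from filterlim_compose[OF PM_lim[OF assms] this] show ?thesis using True unfolding L_def by simp
next
  case False
  hence "bnd h" using assms unfolding Sset_def by blast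
  have "eventually (\<lambda>r. PM h (c r h) = L h) sequentially"
    using bnd_ev[OF \<open>bnd h\<close>] by eventually_elim (use False in \<open>simp add: L_def\<close>)
  thus ?thesis by (rule tendsto_eventually)
qed

lemma L_inj: "inj_on L {..<k}"
proof (rule inj_onI, rule ccontr)
  fix h h' assume h: "h \<in> {..<k}" "h' \<in> {..<k}" "L h = L h'" "h \<noteq> h'"
  show False
  proof (cases "h \<in> Sset"; cases "h' \<in> Sset")
    assume "h \<in> Sset" "h' \<in> Sset" thus False using h mu_inj unfolding L_def by auto
  next
    assume a: "h \<in> Sset" "h' \<notin> Sset"
    hence "bnd h'" using h unfolding Sset_def by auto
    thus False using a h H3[of h' h "Cf h'"] Cf_ge unfolding L_def by auto
  next
    assume a: "h \<notin> Sset" "h' \<in> Sset"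
    hence "bnd h" using h unfolding Sset_def by auto
    thus False using a h H3[of h h' "Cf h"] Cf_ge unfolding L_def by auto
  next
    assume a: "h \<notin> Sset" "h' \<notin> Sset"
    hence "bnd h" "bnd h'" using h unfolding Sset_def by auto
    thus False using a h H2[of h h' "Cf h" "Cf h'"] Cf_ge unfolding L_def by auto
  qed
qed

definition "T = top_set k m L"
definition "B = {..<k} - T"

lemma ev_top: "eventually (\<lambda>r. top_set k m (\<lambda>h. PM h (c r h)) = T) sequentially"
proof -
  have "eventually (\<lambda>r. \<forall>p\<in>{..<k} \<times> {..<k}.
     (PM (fst p) (c r (fst p)) < PM (snd p) (c r (snd p)) \<longleftrightarrow> L (fst p) < L (snd p)) \<and>
     (PM (fst p) (c r (fst p)) = PM (snd p) (c r (snd p)) \<longleftrightarrow> L (fst p) = L (snd p))) sequentially"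
  proof (rule eventually_ball_finite, simp, intro ballI)
    fix p assume p: "p \<in> {..<k} \<times> {..<k}"
    obtain i j where ij: "p = (i, j)" "i < k" "j < k" using p by auto
    have lims: "(\<lambda>r. PM j (c r j) - PM i (c r i)) \<longlonglongrightarrow> L j - L i"
      using L_lim ij by (intro tendsto_intros)
    show "eventually (\<lambda>r. (PM (fst p) (c r (fst p)) < PM (snd p) (c r (snd p)) \<longleftrightarrow> L (fst p) < L (snd p)) \<and>
     (PM (fst p) (c r (fst p)) = PM (snd p) (c r (snd p)) \<longleftrightarrow> L (fst p) = L (snd p))) sequentially"
    proof (cases "i = j")
      case True thus ?thesis using ij by simp
    next
      case False
      hence ne: "L i \<noteq> L j" using L_inj ij unfolding inj_on_def by auto
      show ?thesis
      proof (cases "L i < L j")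
        case True
        have "eventually (\<lambda>r. 0 < PM j (c r j) - PM i (c r i)) sequentially"
          using lims True by (intro order_tendstoD(1)) auto
        thus ?thesis by eventually_elim (use True ij in auto)
      next
        case False
        hence "L j - L i < 0" using ne by auto
        have "eventually (\<lambda>r. PM j (c r j) - PM i (c r i) < 0) sequentially"
          using lims \<open>L j - L i < 0\<close> by (intro order_tendstoD(2)) auto
        thus ?thesis by eventually_elim (use False ij ne in auto)
      qed
    qed
  qed
  thus ?thesis unfolding T_def
  proof eventually_elim
    case (elim r)
    show ?case by (rule top_set_cong) (use elim in auto)
  qed
qed

lemma TB: "finite T" "finite B" "T \<noteq> {}" "B \<noteq> {}" "T \<subseteq> {..<k}" "B \<subseteq> {..<k}" "T \<inter> B = {}"
proof -
  show "T \<subseteq> {..<k}" unfolding T_def top_set_def by auto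
  thus "finite T" using finite_subset by blast
  show "finite B" "B \<subseteq> {..<k}" "T \<inter> B = {}" unfolding B_def by auto
  show "T \<noteq> {}" using top_nonempty[OF L_inj] m1 k2 unfolding T_def by auto
  show "B \<noteq> {}" using bot_nonempty[OF L_inj mk] unfolding B_def T_def by auto
qed

lemma sep: "i \<in> T \<Longrightarrow> j \<in> B \<Longrightarrow> L j < L i"
  using top_sep[OF L_inj, of i m j] unfolding T_def B_def by auto

lemma disj: assumes "best \<notin> T" shows "T \<subseteq> Uset \<or> B \<inter> Uset \<noteq> {}"
proof (cases "best \<in> Sset")
  case True
  have "T \<subseteq> Uset"
  proof
    fix i assume i: "i \<in> T"
    hence ik: "i < k" using TB by auto
    have "best \<in> B" using assms best unfolding B_def by auto
    hence "L best < L i" using sep i by auto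
    moreover have "L best = mu best" using True unfolding L_def by simp
    ultimately have "i \<notin> Sset" using best(2)[OF ik] unfolding L_def by auto
    thus "i \<in> Uset" using ik unfolding Sset_def Uset_def by auto
  qed
  thus ?thesis by blast
next
  case False
  hence "best \<in> Uset" using best unfolding Sset_def Uset_def by auto
  moreover have "best \<in> B" using assms best unfolding B_def by auto
  ultimately show ?thesis by blast
qed

definition "wb b h = (if h \<in> Sset then 0 else if h = b then PV h (Cf h + 1) else PV h (Cf h))"

lemma wb_nonneg: "h < k \<Longrightarrow> 0 \<le> wb b h"
  unfolding wb_def using PV_pos by (auto intro: less_imp_le)

lemma wb_pos: "h \<in> Uset \<Longrightarrow> 0 < wb b h"
  unfolding wb_def Uset_def Sset_def using PV_pos by auto

lemma wb_S: "b \<in> Sset \<Longrightarrow> h < k \<Longrightarrow> wb b h = wb k h"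
  unfolding wb_def Sset_def by auto

lemma sv_lim: assumes "h < k" shows "(\<lambda>r. sv r b h) \<longlonglongrightarrow> wb b h"
proof (cases "h \<in> Sset")
  case True
  define d where "d = (if h = b then 1 else 0::nat)"
  have eq: "(\<lambda>r. sv r b h) = (\<lambda>r. PV h (c r h + d))" unfolding sv_def d_def by auto
  have "filterlim (\<lambda>r. c r h) at_top sequentially" using True unbnd_lim unfolding Sset_def by blast
  hence "filterlim (\<lambda>r. c r h + d) at_top sequentially"
    unfolding filterlim_at_top
  proof (intro allI)
    fix Z assume "\<forall>Z. eventually (\<lambda>r. Z \<le> c r h) sequentially"
    hence "eventually (\<lambda>r. Z \<le> c r h) sequentially" by blast
    thus "eventually (\<lambda>r. Z \<le> c r h + d) sequentially" by (rule eventually_mono) simp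
  qed
  from filterlim_compose[OF PV_lim[OF assms] this]
  show ?thesis unfolding eq using True unfolding wb_def by simp
next
  case False
  hence "bnd h" using assms unfolding Sset_def by blast
  have "eventually (\<lambda>r. sv r b h = wb b h) sequentially"
    using bnd_ev[OF \<open>bnd h\<close>] by eventually_elim (use False in \<open>auto simp add: sv_def wb_def\<close>)
  thus ?thesis by (rule tendsto_eventually)
qed

lemma sv_pos: "h < k \<Longrightarrow> 0 < sv r b h"
  unfolding sv_def using PV_pos by auto

lemma Q_lim: assumes "i < k" "j < k" "i \<in> Uset \<or> j \<in> Uset"
  shows "(\<lambda>r. Q r b i j) \<longlonglongrightarrow> (L i - L j)\<^sup>2 / (wb b i + wb b j)"
proof -
  have "wb b i + wb b j \<noteq> 0"
    using assms wb_nonneg[of i b] wb_nonneg[of j b] wb_pos[of i b] wb_pos[of j b] by auto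
  thus ?thesis unfolding Q_def using assms L_lim sv_lim by (intro tendsto_intros) auto
qed

lemma Q_infty: assumes "i \<in> Sset" "j \<in> Sset" "i \<noteq> j"
  shows "eventually (\<lambda>r. \<theta> < Q r b i j) sequentially"
proof -
  have ik: "i < k" "j < k" using assms unfolding Sset_def by auto
  have "L i \<noteq> L j" using L_inj ik assms(3) unfolding inj_on_def by auto
  hence pos: "(L i - L j)\<^sup>2 > 0" by simp
  have l1: "(\<lambda>r. (PM i (c r i) - PM j (c r j))\<^sup>2) \<longlonglongrightarrow> (L i - L j)\<^sup>2"
    using L_lim ik by (intro tendsto_intros)
  have l2: "(\<lambda>r. sv r b i + sv r b j) \<longlonglongrightarrow> wb b i + wb b j"
    using sv_lim ik by (intro tendsto_intros)
  have "wb b i + wb b j = 0" using assms unfolding wb_def by simp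
  hence l2': "(\<lambda>r. sv r b i + sv r b j) \<longlonglongrightarrow> 0" using l2 by simp
  have "eventually (\<lambda>r. 0 < sv r b i + sv r b j) sequentially"
    using sv_pos ik by (intro always_eventually) (auto intro: add_pos_pos)
  from Q_inf[OF l1 pos l2' this] show ?thesis unfolding Q_def .
qed

lemma Vh_Vfun: "top_set k m (\<lambda>h. PM h (c r h)) = T \<Longrightarrow> Vh r b = Vfun T B (Q r b)"
  unfolding Vh_eq V_val_def Vfun_def bot_set_def B_def Q_def by simp

definition "F i = {j \<in> B. i \<in> Uset \<or> j \<in> Uset}"
definition "qq b i j = (L i - L j)\<^sup>2 / (wb b i + wb b j)"
definition "rho i = Min (qq k i ` F i)"

lemma qq_num_pos: "i \<in> T \<Longrightarrow> j \<in> B \<Longrightarrow> 0 < (L i - L j)\<^sup>2"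
  using sep[of i j] by simp

lemma best_in_T: "best \<in> T"
proof (rule ccontr)
  assume nb: "best \<notin> T"
  note dj = disj[OF nb]
  have Fne: "\<And>i. i \<in> T \<Longrightarrow> F i \<noteq> {}"
  proof -
    fix i assume i: "i \<in> T"
    show "F i \<noteq> {}"
    proof (cases "T \<subseteq> Uset")
      case True thus ?thesis using i TB(4) unfolding F_def by auto
    next
      case False thus ?thesis using dj unfolding F_def by auto
    qed
  qed
  have Ffin: "\<And>i. finite (F i)" using TB(2) unfolding F_def by auto
  have FB: "\<And>i. F i \<subseteq> B" unfolding F_def by auto
  have jex: "\<And>i. i \<in> T \<Longrightarrow> \<exists>j\<in>F i. qq k i j = rho i"
  proof -
    fix i assume "i \<in> T"
    hence "rho i \<in> qq k i ` F i" unfolding rho_def using Fne Ffin by (intro Min_in) auto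
    thus "\<exists>j\<in>F i. qq k i j = rho i" by auto
  qed
  have rho_le: "\<And>i j. j \<in> F i \<Longrightarrow> rho i \<le> qq k i j"
    unfolding rho_def using Ffin by (intro Min_le) auto
  define Vinf where "Vinf = Max (rho ` T)"
  have "Vinf \<in> rho ` T" unfolding Vinf_def using TB by (intro Max_in) auto
  then obtain ist where ist: "ist \<in> T" "rho ist = Vinf" by auto
  have rho_leV: "\<And>i. i \<in> T \<Longrightarrow> rho i \<le> Vinf" unfolding Vinf_def using TB by (intro Max_ge) auto
  have istk: "ist < k" using ist TB by auto
  have "\<exists>u\<in>Uset. \<forall>j\<in>F ist. Vinf < qq u ist j"
  proof (cases "ist \<in> Uset")
    case True
    show ?thesis
    proof (intro bexI[OF _ True] ballI)
      fix j assume j: "j \<in> F ist"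
      have jB: "j \<in> B" using j FB by auto
      hence jk: "j < k" "j \<noteq> ist" using TB ist by auto
      have istS: "ist \<notin> Sset" using True unfolding Uset_def Sset_def by auto
      have d1: "wb ist ist = PV ist (Cf ist + 1)" "wb k ist = PV ist (Cf ist)"
        using istS istk unfolding wb_def by auto
      have d2: "wb ist j = wb k j" using jk unfolding wb_def by auto
      have lt: "wb ist ist < wb k ist" using d1 PV_Suc[OF istk] by simp
      have pos: "0 < wb ist ist" using wb_pos[OF True] .
      have "Vinf \<le> qq k ist j" using rho_le[OF j] ist by simp
      also have "qq k ist j < qq ist ist j"
        unfolding qq_def d2
        using qq_num_pos[OF ist(1) jB] lt pos wb_nonneg[OF jk(1), of k]
        by (intro divide_strict_left_mono) (auto intro: add_pos_nonneg)
      finally show "Vinf < qq ist ist j" .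
    qed
  next
    case False
    hence istS: "ist \<in> Sset" using istk unfolding Uset_def Sset_def by auto
    obtain js where js: "js \<in> F ist" "qq k ist js = rho ist" using jex[OF ist(1)] by blast
    have FU: "\<And>j. j \<in> F ist \<Longrightarrow> j \<in> Uset" using False unfolding F_def by auto
    have jsU: "js \<in> Uset" using FU[OF js(1)] .
    have jsk: "js < k" using jsU unfolding Uset_def by auto
    have jsS: "js \<notin> Sset" using jsU unfolding Uset_def Sset_def by auto
    show ?thesis
    proof (intro bexI[OF _ jsU] ballI)
      fix j assume j: "j \<in> F ist"
      have jB: "j \<in> B" using j FB by auto
      have jU: "j \<in> Uset" using FU[OF j] .
      have jk: "j < k" "j \<noteq> ist" using jB TB ist by auto
      have jS: "j \<notin> Sset" using jU unfolding Uset_def Sset_def by auto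
      have w0: "wb js ist = 0" "wb k ist = 0" using istS unfolding wb_def by auto
      show "Vinf < qq js ist j"
      proof (cases "j = js")
        case True
        have d1: "wb js js = PV js (Cf js + 1)" "wb k js = PV js (Cf js)"
          using jsS jsk unfolding wb_def by auto
        have "Vinf = qq k ist js" using js ist by simp
        also have "\<dots> < qq js ist js"
          unfolding qq_def w0 d1
          using qq_num_pos[OF ist(1)] jB True PV_Suc[OF jsk, of "Cf js"] PV_pos[OF jsk]
          by (intro divide_strict_left_mono) auto
        finally show ?thesis using True by simp
      next
        case False
        have d2: "wb js j = wb k j" using False jk unfolding wb_def by auto
        have Lst: "L ist = mu ist" using istS unfolding L_def by simp
        have Lj: "L j = PM j (Cf j)" "L js = PM js (Cf js)" using jS jsS unfolding L_def by auto
        have wj: "wb k j = PV j (Cf j)" "wb k js = PV js (Cf js)" using jS jsS jk jsk unfolding wb_def by auto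
        have bj: "bnd j" "bnd js" using jU jsU unfolding Uset_def by auto
        have ne: "qq k ist j \<noteq> qq k ist js"
        proof
          assume eq: "qq k ist j = qq k ist js"
          have p1: "0 < PV j (Cf j)" "0 < PV js (Cf js)" using PV_pos jk jsk by auto
          from eq have "(mu ist - PM j (Cf j))\<^sup>2 / PV j (Cf j) = (mu ist - PM js (Cf js))\<^sup>2 / PV js (Cf js)"
            unfolding qq_def w0 Lst Lj wj by simp
          hence "(mu ist - PM j (Cf j))\<^sup>2 * PV js (Cf js) = (mu ist - PM js (Cf js))\<^sup>2 * PV j (Cf j)"
            using p1 by (simp add: field_simps)
          thus False using H4[OF istk jk(1) jsk False Cf_ge[OF bj(1)] Cf_ge[OF bj(2)]] by simp
        qed
        have "Vinf = qq k ist js" using js ist by simp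
        also have "\<dots> \<le> qq k ist j" using rho_le[OF j] js by simp
        finally have "Vinf < qq k ist j" using ne js ist by (simp add: order_le_less)
        also have "qq k ist j = qq js ist j" unfolding qq_def w0 d2 by simp
        finally show ?thesis .
      qed
    qed
  qed
  then obtain u where uU: "u \<in> Uset" and u: "\<And>j. j \<in> F ist \<Longrightarrow> Vinf < qq u ist j" by blast
  have uk: "u < k" using uU unfolding Uset_def by auto
  define G where "G = insert (Vinf + 1) (qq u ist ` F ist)"
  have Gfin: "finite G" unfolding G_def using Ffin by auto
  have GV: "Vinf < Min G" unfolding G_def using Ffin u by (subst Min_gr_iff) auto
  define th where "th = (Vinf + Min G) / 2"
  have th1: "Vinf < th" unfolding th_def using GV by simp
  have th2: "\<And>j. j \<in> F ist \<Longrightarrow> th < qq u ist j"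
  proof -
    fix j assume "j \<in> F ist"
    hence "Min G \<le> qq u ist j" using Gfin unfolding G_def by (intro Min_le) auto
    thus "th < qq u ist j" unfolding th_def using GV by simp
  qed
  have E1: "eventually (\<lambda>r. \<forall>b\<in>Sset. \<forall>i\<in>T. \<exists>j\<in>B. Q r b i j < th) sequentially"
  proof (rule eventually_ball_finite)
    show "finite Sset" unfolding Sset_def by auto
    show "\<forall>b\<in>Sset. eventually (\<lambda>r. \<forall>i\<in>T. \<exists>j\<in>B. Q r b i j < th) sequentially"
    proof
      fix b assume b: "b \<in> Sset"
      show "eventually (\<lambda>r. \<forall>i\<in>T. \<exists>j\<in>B. Q r b i j < th) sequentially"
      proof (rule eventually_ball_finite[OF TB(1)], rule ballI)
        fix i assume i: "i \<in> T"
        obtain j where j: "j \<in> F i" "qq k i j = rho i" using jex[OF i] by blast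
        have ik: "i < k" "j < k" "j \<in> B" using i j FB TB by auto
        have fin: "i \<in> Uset \<or> j \<in> Uset" using j unfolding F_def by auto
        have "(L i - L j)\<^sup>2 / (wb b i + wb b j) = qq k i j"
          unfolding qq_def using wb_S[OF b] ik by simp
        also have "\<dots> < th" using j rho_leV[OF i] th1 by simp
        finally have "eventually (\<lambda>r. Q r b i j < th) sequentially"
          using Q_lim[OF ik(1,2) fin, of b] by (intro order_tendstoD(2))
        thus "eventually (\<lambda>r. \<exists>j\<in>B. Q r b i j < th) sequentially"
          by (rule eventually_mono) (use ik in blast)
      qed
    qed
  qed
  have E2: "eventually (\<lambda>r. \<forall>j\<in>B. th < Q r u ist j) sequentially"
  proof (rule eventually_ball_finite[OF TB(2)], rule ballI)
    fix j assume j: "j \<in> B"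
    have jk: "j < k" "j \<noteq> ist" using j TB ist by auto
    show "eventually (\<lambda>r. th < Q r u ist j) sequentially"
    proof (cases "ist \<in> Uset \<or> j \<in> Uset")
      case True
      hence "j \<in> F ist" using j unfolding F_def by auto
      hence "th < qq u ist j" by (rule th2)
      thus ?thesis using Q_lim[OF istk jk(1) True, of u] unfolding qq_def by (intro order_tendstoD(1))
    next
      case False
      hence "ist \<in> Sset" "j \<in> Sset" using istk jk unfolding Uset_def Sset_def by auto
      thus ?thesis using Q_infty jk(2) by metis
    qed
  qed
  have "eventually (\<lambda>r. False) sequentially"
    using E1 E2 ev_aS ev_top
  proof eventually_elim
    case (elim r)
    have "Vh r (a r) = Vfun T B (Q r (a r))" using Vh_Vfun elim(4) by blast
    also have "\<dots> < th" using elim(1,3) TB by (intro Vfun_less) auto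
    finally have 1: "Vh r (a r) < th" .
    have "th < Vfun T B (Q r u)" using elim(2) TB ist by (intro Vfun_greater) auto
    also have "\<dots> = Vh r u" using Vh_Vfun elim(4) by simp
    finally have "th < Vh r u" .
    moreover have "Vh r u \<le> Vh r (a r)" using a_max[OF uk] .
    ultimately show False using 1 by linarith
  qed
  thus False by simp
qed

theorem eventually_best: "\<exists>r0. \<forall>r\<ge>r0. best \<in> top_set k m (pmeans mu0 sigma0 sigma X w (c r))"
proof -
  have "eventually (\<lambda>r. best \<in> top_set k m (pmeans mu0 sigma0 sigma X w (c r))) sequentially"
    using ev_top
  proof eventually_elim
    case (elim r)
    have "pmeans mu0 sigma0 sigma X w (c r) = (\<lambda>h. PM h (c r h))"
      unfolding pmeans_def PMw_def by (simp add: fun_eq_iff)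
    thus ?case using elim best_in_T by simp
  qed
  thus ?thesis unfolding eventually_sequentially by blast
qed

end

context prob_space begin

lemma ae_ne_const:
  assumes "distributed M lborel Y f"
  shows "AE w in M. Y w \<noteq> c"
proof -
  have fm: "f \<in> borel_measurable lborel" using distributed_borel_measurable[OF assms] .
  have "AE y in density lborel f. y \<noteq> c"
    using AE_lborel_singleton[of c] by (subst AE_density[OF fm]) (auto elim: eventually_mono)
  hence "AE y in distr M lborel Y. y \<noteq> c" unfolding distributed_distr_eq_density[OF assms] .
  thus ?thesis by (rule AE_distrD[OF distributed_measurable[OF assms]])
qed

lemma ae_pair_zero:
  fixes Y Z :: "'a \<Rightarrow> real"
  assumes ind: "indep_var borel Z borel Y" and dY: "distributed M lborel Y f"
    and g1: "g1 \<in> borel_measurable borel" and g2: "g2 \<in> borel_measurable borel"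
    and P: "\<And>w. P w \<Longrightarrow> Y w = g1 (Z w) \<or> Y w = g2 (Z w)"
  shows "AE w in M. \<not> P w"
proof -
  have rv: "random_variable borel Z" "random_variable borel Y"
    and eq: "distr M borel Z \<Otimes>\<^sub>M distr M borel Y = distr M (borel \<Otimes>\<^sub>M borel) (\<lambda>x. (Z x, Y x))"
    using ind unfolding indep_var_distribution_eq by auto
  interpret PZ: prob_space "distr M borel Z" by (rule prob_space_distr) fact
  interpret PY: prob_space "distr M borel Y" by (rule prob_space_distr) fact
  interpret PP: pair_prob_space "distr M borel Z" "distr M borel Y" ..
  have fm: "f \<in> borel_measurable lborel" using distributed_borel_measurable[OF dY] .
  have dYe: "distr M borel Y = density lborel f"
    using distributed_distr_eq_density[OF dY] by (metis distr_cong sets_lborel)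
  have inner: "\<And>z. AE y in distr M borel Y. y \<noteq> g1 z \<and> y \<noteq> g2 z"
  proof -
    fix z
    have "AE y in lborel. y \<noteq> g1 z \<and> y \<noteq> g2 z"
      using AE_lborel_singleton[of "g1 z"] AE_lborel_singleton[of "g2 z"] by eventually_elim auto
    thus "AE y in distr M borel Y. y \<noteq> g1 z \<and> y \<noteq> g2 z"
      unfolding dYe by (subst AE_density[OF fm]) (auto elim: eventually_mono)
  qed
  have "AE x in distr M borel Z \<Otimes>\<^sub>M distr M borel Y. snd x \<noteq> g1 (fst x) \<and> snd x \<noteq> g2 (fst x)"
  proof (rule PP.AE_pair_measure)
    have "{x \<in> space (borel \<Otimes>\<^sub>M borel). snd x \<noteq> g1 (fst x) \<and> snd x \<noteq> g2 (fst x)} \<in> sets (borel \<Otimes>\<^sub>M (borel :: real measure))"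
      using g1 g2 by measurable
    moreover have "sets (distr M borel Z \<Otimes>\<^sub>M distr M borel Y) = sets (borel \<Otimes>\<^sub>M (borel :: real measure))"
      by (intro sets_pair_measure_cong) auto
    moreover have "space (distr M borel Z \<Otimes>\<^sub>M distr M borel Y) = space (borel \<Otimes>\<^sub>M (borel :: real measure))"
      by (simp add: space_pair_measure)
    ultimately show "{x \<in> space (distr M borel Z \<Otimes>\<^sub>M distr M borel Y). snd x \<noteq> g1 (fst x) \<and> snd x \<noteq> g2 (fst x)}
        \<in> sets (distr M borel Z \<Otimes>\<^sub>M distr M borel Y)" by simp
    show "AE x in distr M borel Z. AE y in distr M borel Y. snd (x, y) \<noteq> g1 (fst (x, y)) \<and> snd (x, y) \<noteq> g2 (fst (x, y))"
      using inner by simp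
  qed
  hence "AE x in distr M (borel \<Otimes>\<^sub>M borel) (\<lambda>x. (Z x, Y x)). snd x \<noteq> g1 (fst x) \<and> snd x \<noteq> g2 (fst x)"
    unfolding eq .
  moreover have "(\<lambda>x. (Z x, Y x)) \<in> measurable M (borel \<Otimes>\<^sub>M borel)" using rv by (auto intro: measurable_Pair)
  ultimately have "AE w in M. snd (Z w, Y w) \<noteq> g1 (fst (Z w, Y w)) \<and> snd (Z w, Y w) \<noteq> g2 (fst (Z w, Y w))"
    using AE_distrD by blast
  hence "AE w in M. Y w \<noteq> g1 (Z w) \<and> Y w \<noteq> g2 (Z w)" by simp
  thus ?thesis by eventually_elim (use P in blast)
qed

lemma sum_single_prod: "(\<Sum>p\<in>{j} \<times> A. g p) = (\<Sum>i\<in>A. g (j, i))"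
proof -
  have "{j} \<times> A = Pair j ` A" by auto
  moreover have "inj_on (Pair j) A" by (auto simp: inj_on_def)
  ultimately show ?thesis by (simp add: sum.reindex)
qed

lemma sum_block_normal:
  fixes X :: "nat \<Rightarrow> nat \<Rightarrow> 'a \<Rightarrow> real" and mu sigma :: "nat \<Rightarrow> real"
  assumes ind: "indep_vars (\<lambda>_. borel) (\<lambda>(h, i). X h i) ({..<k} \<times> UNIV)"
    and dist: "\<And>h i. h < k \<Longrightarrow> distributed M lborel (X h i) (normal_density (mu h) (sigma h))"
    and sig: "\<And>h. h < k \<Longrightarrow> sigma h > 0"
    and h: "h < k" and n: "1 \<le> n"
  shows "distributed M lborel (\<lambda>w. \<Sum>i<n. X h i w) (normal_density (real n * mu h) (sqrt (real n) * sigma h))"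
proof -
  let ?I = "{h} \<times> {..<n}"
  have "distributed M lborel (\<lambda>x. \<Sum>p\<in>?I. (\<lambda>(h, i). X h i) p x)
      (normal_density (\<Sum>p\<in>?I. mu (fst p)) (sqrt (\<Sum>p\<in>?I. (sigma (fst p))\<^sup>2)))"
  proof (rule sum_indep_normal)
    show "finite ?I" by simp
    have "(h, 0) \<in> ?I" using n by simp
    thus "?I \<noteq> {}" by blast
    show "indep_vars (\<lambda>i. borel) (\<lambda>(h, i). X h i) ?I" using h by (intro indep_vars_subset[OF ind]) auto
    show "\<And>p. p \<in> ?I \<Longrightarrow> 0 < sigma (fst p)" using sig h by auto
    show "\<And>p. p \<in> ?I \<Longrightarrow> distributed M lborel ((\<lambda>(h, i). X h i) p) (normal_density (mu (fst p)) (sigma (fst p)))"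
      using dist h by auto
  qed
  moreover have "\<And>g::nat \<times> nat \<Rightarrow> real. (\<Sum>p\<in>?I. g p) = (\<Sum>i<n. g (h, i))"
    by (rule sum_single_prod)
  moreover have "sqrt (real n * (sigma h)\<^sup>2) = sqrt (real n) * sigma h"
    using sig[OF h] by (simp add: real_sqrt_mult)
  ultimately show ?thesis by simp
qed

lemma sum_block_indep:
  fixes X :: "nat \<Rightarrow> nat \<Rightarrow> 'a \<Rightarrow> real"
  assumes ind: "indep_vars (\<lambda>_. borel) (\<lambda>(h, i). X h i) ({..<k} \<times> UNIV)"
    and h: "h < k" "h' < k" "h \<noteq> h'"
  shows "indep_var borel (\<lambda>w. \<Sum>i<n. X h i w) borel (\<lambda>w. \<Sum>i<n'. X h' i w)"
proof -
  let ?A = "{h} \<times> {..<n}" and ?B = "{h'} \<times> {..<n'}"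
  have "indep_var borel ((\<lambda>f. \<Sum>p\<in>?A. f p) \<circ> (\<lambda>\<omega>. restrict (\<lambda>p. (\<lambda>(h, i). X h i) p \<omega>) ?A))
                  borel ((\<lambda>f. \<Sum>p\<in>?B. f p) \<circ> (\<lambda>\<omega>. restrict (\<lambda>p. (\<lambda>(h, i). X h i) p \<omega>) ?B))"
    using h by (intro indep_var_compose[OF indep_var_restrict[OF ind]]) auto
  moreover have "\<And>j m. ((\<lambda>f. \<Sum>p\<in>{j} \<times> {..<m}. f p) \<circ> (\<lambda>\<omega>. restrict (\<lambda>p. (\<lambda>(h, i). X h i) p \<omega>) ({j} \<times> {..<m})))
      = (\<lambda>w. \<Sum>i<m. X j i w)"
    by (auto simp: fun_eq_iff sum_single_prod)
  ultimately show ?thesis by simp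
qed

lemma normal_4th_moment:
  assumes "s > 0" "distributed M lborel D (normal_density 0 s)"
  shows "integrable M (\<lambda>w. D w ^ 4)" "(\<integral>w. D w ^ 4 \<partial>M) = 3 * s ^ 4"
proof -
  have hb: "has_bochner_integral lborel (\<lambda>x. normal_density 0 s x * (x - 0) ^ (2 * 2)) (fact (2 * 2) / ((2 / s\<^sup>2) ^ 2 * fact 2))"
    using normal_moment_even[of s 0 2] assms(1) by simp
  have val: "fact (2 * 2) / ((2 / s\<^sup>2) ^ 2 * fact 2) = 3 * s ^ 4"
    using assms(1) by (simp add: fact_numeral field_simps power2_eq_square power4_eq_xxxx)
  have int: "integrable lborel (\<lambda>x. normal_density 0 s x * x ^ 4)"
    using hb by (simp add: has_bochner_integral_iff)
  show "integrable M (\<lambda>w. D w ^ 4)"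
    using int distributed_integrable[OF assms(2), of "\<lambda>x. x ^ 4"] by simp
  have "(\<integral>x. normal_density 0 s x * x ^ 4 \<partial>lborel) = 3 * s ^ 4"
    using hb val by (simp add: has_bochner_integral_iff)
  moreover have "(\<integral>x. normal_density 0 s x * x ^ 4 \<partial>lborel) = (\<integral>w. D w ^ 4 \<partial>M)"
    using distributed_integral[OF assms(2), of "\<lambda>x. x ^ 4"] by simp
  ultimately show "(\<integral>w. D w ^ 4 \<partial>M) = 3 * s ^ 4" by simp
qed

lemma slln_normal:
  fixes S :: "nat \<Rightarrow> 'a \<Rightarrow> real"
  assumes dS: "\<And>n. 1 \<le> n \<Longrightarrow> distributed M lborel (S n) (normal_density (real n * \<mu>) (sqrt (real n) * \<sigma>))"
    and sig: "\<sigma> > 0"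
  shows "AE w in M. (\<lambda>n. S n w / real n) \<longlonglongrightarrow> \<mu>"
proof -
  define D where "D n w = S n w - real n * \<mu>" for n w
  have dD: "distributed M lborel (D n) (normal_density 0 (sqrt (real n) * \<sigma>))" if n: "1 \<le> n" for n
  proof -
    have pos: "0 < sqrt (real n) * \<sigma>" using n sig by simp
    have "distributed M lborel (\<lambda>x. - (real n * \<mu>) + 1 * S n x)
        (normal_density (- (real n * \<mu>) + 1 * (real n * \<mu>)) (\<bar>1\<bar> * (sqrt (real n) * \<sigma>)))"
      by (rule normal_density_affine[OF dS[OF n] pos]) simp
    thus ?thesis unfolding D_def by simp
  qed
  have Dm: "D (Suc n) \<in> borel_measurable M" for n
    using distributed_measurable[OF dD[of "Suc n"]] by simp
  have bnd: "measure M {w\<in>space M. (real n * e) ^ 4 \<le> D n w ^ 4} \<le> 3 * \<sigma> ^ 4 / e ^ 4 * inverse (real n ^ 2)"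
    if n: "1 \<le> n" and e: "e > 0" for n e
  proof -
    have pos: "0 < sqrt (real n) * \<sigma>" using n sig by simp
    note mom = normal_4th_moment[OF pos dD[OF n]]
    have "measure M {w\<in>space M. (real n * e) ^ 4 \<le> D n w ^ 4} \<le> (\<integral>w. D n w ^ 4 \<partial>M) / (real n * e) ^ 4"
      using mom n e by (intro integral_Markov_inequality_measure[where A="space M"]) auto
    hence "measure M {w\<in>space M. (real n * e) ^ 4 \<le> D n w ^ 4} \<le> 3 * (sqrt (real n) * \<sigma>) ^ 4 / (real n * e) ^ 4"
      using mom by simp
    also have "(sqrt (real n) * \<sigma>) ^ 4 = real n ^ 2 * \<sigma> ^ 4"
    proof -
      have "sqrt (real n) * sqrt (real n) = real n" by simp
      thus ?thesis by (simp add: power_mult_distrib power4_eq_xxxx power2_eq_square mult.assoc)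
    qed
    also have "3 * (real n ^ 2 * \<sigma> ^ 4) / (real n * e) ^ 4 = 3 * \<sigma> ^ 4 / e ^ 4 * inverse (real n ^ 2)"
      using n e by (simp add: field_simps power2_eq_square power4_eq_xxxx)
    finally show ?thesis .
  qed
  have ev: "AE w in M. eventually (\<lambda>n. \<bar>D (Suc n) w\<bar> < real (Suc n) * e) sequentially" if e: "e > 0" for e
  proof -
    define A where "A n = {w\<in>space M. (real (Suc n) * e) ^ 4 \<le> D (Suc n) w ^ 4}" for n
    have "AE w in M. eventually (\<lambda>n. w \<in> space M - A n) sequentially"
    proof (rule borel_cantelli_AE1)
      show "\<And>n. A n \<in> sets M"
      proof -
        fix n
        have f: "(\<lambda>w. D (Suc n) w ^ 4) \<in> borel_measurable M" using Dm[of n] by (intro borel_measurable_power)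
        have "A n = (\<lambda>w. D (Suc n) w ^ 4) -` {(real (Suc n) * e) ^ 4..} \<inter> space M" unfolding A_def by auto
        thus "A n \<in> sets M" using measurable_sets[OF f, of "{(real (Suc n) * e) ^ 4..}"] by simp
      qed
      show "\<And>n. emeasure M (A n) < \<infinity>" by (simp add: emeasure_eq_measure)
      have "summable (\<lambda>n. 3 * \<sigma> ^ 4 / e ^ 4 * inverse (real (Suc n) ^ 2))"
      proof (rule summable_mult)
        have "summable (\<lambda>n. inverse (real n ^ 2))" using inverse_power_summable[of 2, where 'a=real] by simp
        hence "summable (\<lambda>n. (\<lambda>n. inverse (real n ^ 2)) (Suc n))" by (subst summable_Suc_iff)
        thus "summable (\<lambda>n. inverse (real (Suc n) ^ 2))" by (simp only:)
      qed
      thus "summable (\<lambda>n. measure M (A n))"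
      proof (rule summable_comparison_test'[where N=0])
        fix n :: nat
        have "measure M (A n) \<le> 3 * \<sigma> ^ 4 / e ^ 4 * inverse (real (Suc n) ^ 2)"
          unfolding A_def by (rule bnd[OF _ e]) simp
        thus "norm (measure M (A n)) \<le> 3 * \<sigma> ^ 4 / e ^ 4 * inverse (real (Suc n) ^ 2)" by simp
      qed
    qed
    thus ?thesis
    proof (rule eventually_mono)
      fix w assume "eventually (\<lambda>n. w \<in> space M - A n) sequentially"
      thus "eventually (\<lambda>n. \<bar>D (Suc n) w\<bar> < real (Suc n) * e) sequentially"
      proof (rule eventually_mono)
        fix n assume "w \<in> space M - A n"
        hence "\<not> (real (Suc n) * e) ^ 4 \<le> D (Suc n) w ^ 4" unfolding A_def by blast
        hence "D (Suc n) w ^ 4 < (real (Suc n) * e) ^ 4" by (simp only: not_le)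
        hence "\<bar>D (Suc n) w\<bar> ^ 4 < (real (Suc n) * e) ^ 4" by (simp only: power_even_abs_numeral even_numeral)
        moreover have "0 \<le> real (Suc n) * e" using e by simp
        ultimately show "\<bar>D (Suc n) w\<bar> < real (Suc n) * e" by (rule power_less_imp_less_base)
      qed
    qed
  qed
  have "AE w in M. \<forall>j::nat. eventually (\<lambda>n. \<bar>D (Suc n) w\<bar> < real (Suc n) * inverse (real (Suc j))) sequentially"
    unfolding AE_all_countable
  proof
    fix j :: nat
    have "0 < inverse (real (Suc j))" by simp
    thus "AE w in M. eventually (\<lambda>n. \<bar>D (Suc n) w\<bar> < real (Suc n) * inverse (real (Suc j))) sequentially"
      by (rule ev)
  qed
  thus ?thesis
  proof (rule eventually_mono)
    fix w assume H: "\<forall>j::nat. eventually (\<lambda>n. \<bar>D (Suc n) w\<bar> < real (Suc n) * inverse (real (Suc j))) sequentially"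
    have "(\<lambda>n. S (Suc n) w / real (Suc n)) \<longlonglongrightarrow> \<mu>"
    proof (rule LIMSEQ_I)
      fix r :: real assume r: "0 < r"
      obtain j :: nat where j: "inverse (real (Suc j)) < r" using reals_Archimedean[OF r] by blast
      have "eventually (\<lambda>n. \<bar>D (Suc n) w\<bar> < real (Suc n) * inverse (real (Suc j))) sequentially"
        using H by blast
      then obtain N where N: "\<And>n. N \<le> n \<Longrightarrow> \<bar>D (Suc n) w\<bar> < real (Suc n) * inverse (real (Suc j))"
        unfolding eventually_sequentially by blast
      show "\<exists>no. \<forall>n\<ge>no. norm (S (Suc n) w / real (Suc n) - \<mu>) < r"
      proof (intro exI allI impI)
        fix n assume "N \<le> n"
        note Nn = N[OF this]
        have pos: "0 < real (Suc n)" by simp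
        have eq: "S (Suc n) w / real (Suc n) - \<mu> = D (Suc n) w / real (Suc n)"
          unfolding D_def using pos by (simp add: diff_divide_distrib)
        have "\<bar>D (Suc n) w / real (Suc n)\<bar> = \<bar>D (Suc n) w\<bar> / real (Suc n)"
          using pos by (simp add: abs_divide)
        also have "\<dots> < inverse (real (Suc j))"
          using Nn pos by (simp add: divide_less_eq mult.commute)
        finally show "norm (S (Suc n) w / real (Suc n) - \<mu>) < r" using eq j by simp
      qed
    qed
    thus "(\<lambda>n. S n w / real n) \<longlonglongrightarrow> \<mu>" by (rule LIMSEQ_imp_Suc)
  qed
qed

end

lemma post_mean_affine:
  "post_mean m0 s0 s n y = post_var s0 s n * (m0 / s0\<^sup>2) + (post_var s0 s n / s\<^sup>2) * y"
  unfolding post_mean_def by (simp add: algebra_simps)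

lemma post_mean_solve:
  assumes "s0 > 0" "s > 0" "post_mean m0 s0 s n y = t"
  shows "y = (t - post_var s0 s n * (m0 / s0\<^sup>2)) / (post_var s0 s n / s\<^sup>2)"
proof -
  define a where "a = post_var s0 s n / s\<^sup>2"
  define b where "b = post_var s0 s n * (m0 / s0\<^sup>2)"
  have a: "a > 0" unfolding a_def using post_var_pos[OF assms(1,2)] assms(2) by simp
  have t: "t = b + a * y" using assms(3) unfolding post_mean_affine a_def b_def by simp
  have "(t - b) / a = y" unfolding t using a by simp
  thus ?thesis unfolding a_def b_def by simp
qed

lemma post_mean_meas[measurable]: "(\<lambda>y. post_mean m0 s0 s n y) \<in> borel_measurable borel"
  unfolding post_mean_affine by measurable

theorem theorem1:
  fixes M :: "'w measure"
    and k m n0 :: nat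
    and mu sigma mu0 sigma0 :: "nat \<Rightarrow> real"
    and X :: "nat \<Rightarrow> nat \<Rightarrow> 'w \<Rightarrow> real"
    and pick :: "nat \<Rightarrow> (nat \<Rightarrow> real) \<Rightarrow> nat"
    and best :: nat
  assumes "prob_space M"
    and "2 \<le> k" and "1 \<le> m" and "m < k" and "1 \<le> n0"
    and "\<And>h. h < k \<Longrightarrow> sigma h > 0"
    and "\<And>h. h < k \<Longrightarrow> sigma0 h > 0"
    and "\<And>h h'. h < k \<Longrightarrow> h' < k \<Longrightarrow> h \<noteq> h' \<Longrightarrow> mu h \<noteq> mu h'"
    and "best < k" and "\<And>h. h < k \<Longrightarrow> mu h \<le> mu best"
    and "\<And>h i. h < k \<Longrightarrow> distributed M lborel (X h i) (normal_density (mu h) (sigma h))"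
    and "prob_space.indep_vars M (\<lambda>_. borel) (\<lambda>(h, i). X h i) ({..<k} \<times> UNIV)"
    and "\<And>r V. pick r V < k \<and> (\<forall>a<k. V a \<le> V (pick r V))"
  shows "AE w in M. \<exists>r0. \<forall>r\<ge>r0.
           best \<in> top_set k m (pmeans mu0 sigma0 sigma X w
                                 (aoa_counts k m n0 mu0 sigma0 sigma X pick w r))"
proof -
  interpret prob_space M by fact
  note sig = assms(6) and sig0 = assms(7) and dist = assms(11) and ind = assms(12)
  define Sm where "Sm h n w = (\<Sum>i<n. X h i w)" for h n w
  have dS: "\<And>h n. h < k \<Longrightarrow> 1 \<le> n \<Longrightarrow> distributed M lborel (Sm h n) (normal_density (real n * mu h) (sqrt (real n) * sigma h))"
    unfolding Sm_def by (rule sum_block_normal[OF ind dist sig]) auto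
  have iS: "\<And>h h' n n'. h < k \<Longrightarrow> h' < k \<Longrightarrow> h \<noteq> h' \<Longrightarrow> indep_var borel (Sm h n) borel (Sm h' n')"
    unfolding Sm_def by (rule sum_block_indep[OF ind]) auto
  define al where "al h n = post_var (sigma0 h) (sigma h) n / (sigma h)\<^sup>2" for h n
  define be where "be h n = post_var (sigma0 h) (sigma h) n * (mu0 h / (sigma0 h)\<^sup>2)" for h n
  have solve: "Sm h n w = (t - be h n) / al h n" if "h < k" "PMw mu0 sigma0 sigma X w h n = t" for h n w t
    unfolding PMw_def Sm_def al_def be_def using sig sig0 that by (intro post_mean_solve) (auto simp: PMw_def)
  have A1: "AE w in M. \<forall>h<k. (\<lambda>n. (\<Sum>i<n. X h i w) / real n) \<longlonglongrightarrow> mu h"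
  proof -
    have "AE w in M. \<forall>h\<in>{..<k}. (\<lambda>n. Sm h n w / real n) \<longlonglongrightarrow> mu h"
      by (rule AE_finite_allI) (auto intro!: slln_normal dS sig)
    thus ?thesis unfolding Sm_def by (rule eventually_mono) auto
  qed
  have A2: "AE w in M. \<forall>h h' n n'. h < k \<longrightarrow> h' < k \<longrightarrow> h \<noteq> h' \<longrightarrow> 1 \<le> n \<longrightarrow> 1 \<le> n' \<longrightarrow>
               PMw mu0 sigma0 sigma X w h n \<noteq> PMw mu0 sigma0 sigma X w h' n'"
    unfolding AE_all_countable
  proof (intro allI)
    fix h h' n n' :: nat
    show "AE w in M. h < k \<longrightarrow> h' < k \<longrightarrow> h \<noteq> h' \<longrightarrow> 1 \<le> n \<longrightarrow> 1 \<le> n' \<longrightarrow>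
               PMw mu0 sigma0 sigma X w h n \<noteq> PMw mu0 sigma0 sigma X w h' n'"
    proof (cases "h < k \<and> h' < k \<and> h \<noteq> h' \<and> 1 \<le> n \<and> 1 \<le> n'")
      case True
      define g where "g z = (post_mean (mu0 h') (sigma0 h') (sigma h') n' z - be h n) / al h n" for z
      have gm: "g \<in> borel_measurable borel" unfolding g_def by measurable
      have "AE w in M. \<not> (PMw mu0 sigma0 sigma X w h n = PMw mu0 sigma0 sigma X w h' n')"
      proof (rule ae_pair_zero[OF iS[of h' h n' n] dS[of h n] gm gm])
        fix w assume eqw: "PMw mu0 sigma0 sigma X w h n = PMw mu0 sigma0 sigma X w h' n'"
        have "Sm h n w = (PMw mu0 sigma0 sigma X w h' n' - be h n) / al h n"
          by (rule solve) (use True eqw in auto)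
        hence "Sm h n w = g (Sm h' n' w)"
          unfolding g_def PMw_def Sm_def by simp
        thus "Sm h n w = g (Sm h' n' w) \<or> Sm h n w = g (Sm h' n' w)" by simp
      qed (use True in auto)
      thus ?thesis by (rule eventually_mono) blast
    next
      case False thus ?thesis by (intro AE_I2) auto
    qed
  qed
  have A3: "AE w in M. \<forall>h h' n. h < k \<longrightarrow> h' < k \<longrightarrow> 1 \<le> n \<longrightarrow> PMw mu0 sigma0 sigma X w h n \<noteq> mu h'"
    unfolding AE_all_countable
  proof (intro allI)
    fix h h' n :: nat
    show "AE w in M. h < k \<longrightarrow> h' < k \<longrightarrow> 1 \<le> n \<longrightarrow> PMw mu0 sigma0 sigma X w h n \<noteq> mu h'"
    proof (cases "h < k \<and> h' < k \<and> 1 \<le> n")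
      case True
      have "AE w in M. Sm h n w \<noteq> (mu h' - be h n) / al h n" using True by (intro ae_ne_const[OF dS]) auto
      thus ?thesis
      proof (rule eventually_mono)
        fix w assume ne: "Sm h n w \<noteq> (mu h' - be h n) / al h n"
        show "h < k \<longrightarrow> h' < k \<longrightarrow> 1 \<le> n \<longrightarrow> PMw mu0 sigma0 sigma X w h n \<noteq> mu h'"
        proof (intro impI notI)
          assume "h < k" "h' < k" "1 \<le> n" "PMw mu0 sigma0 sigma X w h n = mu h'"
          hence "Sm h n w = (mu h' - be h n) / al h n" by (intro solve)
          thus False using ne by simp
        qed
      qed
    next
      case False thus ?thesis by (intro AE_I2) auto
    qed
  qed
  have A4: "AE w in M. \<forall>i j j' n n'. i < k \<longrightarrow> j < k \<longrightarrow> j' < k \<longrightarrow> j \<noteq> j' \<longrightarrow> 1 \<le> n \<longrightarrow> 1 \<le> n' \<longrightarrow>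
               (mu i - PMw mu0 sigma0 sigma X w j n)\<^sup>2 * PVw sigma0 sigma j' n' \<noteq>
               (mu i - PMw mu0 sigma0 sigma X w j' n')\<^sup>2 * PVw sigma0 sigma j n"
    unfolding AE_all_countable
  proof (intro allI)
    fix i j j' n n' :: nat
    show "AE w in M. i < k \<longrightarrow> j < k \<longrightarrow> j' < k \<longrightarrow> j \<noteq> j' \<longrightarrow> 1 \<le> n \<longrightarrow> 1 \<le> n' \<longrightarrow>
               (mu i - PMw mu0 sigma0 sigma X w j n)\<^sup>2 * PVw sigma0 sigma j' n' \<noteq>
               (mu i - PMw mu0 sigma0 sigma X w j' n')\<^sup>2 * PVw sigma0 sigma j n"
    proof (cases "i < k \<and> j < k \<and> j' < k \<and> j \<noteq> j' \<and> 1 \<le> n \<and> 1 \<le> n'")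
      case True
      define v where "v = PVw sigma0 sigma j n"
      define v' where "v' = PVw sigma0 sigma j' n'"
      have vpos: "0 < v" "0 < v'" unfolding v_def v'_def PVw_def using True sig sig0
        by (auto intro!: post_var_pos)
      define R where "R z = sqrt ((mu i - post_mean (mu0 j') (sigma0 j') (sigma j') n' z)\<^sup>2 * v / v')" for z
      define g1 where "g1 z = (mu i - R z - be j n) / al j n" for z
      define g2 where "g2 z = (mu i + R z - be j n) / al j n" for z
      have gm: "g1 \<in> borel_measurable borel" "g2 \<in> borel_measurable borel"
        unfolding g1_def g2_def R_def by measurable
      have "AE w in M. \<not> ((mu i - PMw mu0 sigma0 sigma X w j n)\<^sup>2 * v' =
               (mu i - PMw mu0 sigma0 sigma X w j' n')\<^sup>2 * v)"
      proof (rule ae_pair_zero[OF iS[of j' j n' n] dS[of j n] gm])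
        fix w assume eqw: "(mu i - PMw mu0 sigma0 sigma X w j n)\<^sup>2 * v' =
               (mu i - PMw mu0 sigma0 sigma X w j' n')\<^sup>2 * v"
        have Rw: "R (Sm j' n' w) = sqrt ((mu i - PMw mu0 sigma0 sigma X w j' n')\<^sup>2 * v / v')"
          unfolding R_def PMw_def Sm_def by simp
        have "(mu i - PMw mu0 sigma0 sigma X w j n)\<^sup>2 = (mu i - PMw mu0 sigma0 sigma X w j' n')\<^sup>2 * v / v'"
          using eqw vpos by (simp add: field_simps)
        also have "\<dots> = (R (Sm j' n' w))\<^sup>2" unfolding Rw using vpos by simp
        finally have "mu i - PMw mu0 sigma0 sigma X w j n = R (Sm j' n' w) \<or>
                      mu i - PMw mu0 sigma0 sigma X w j n = - R (Sm j' n' w)"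
          by (simp add: power2_eq_iff)
        hence "PMw mu0 sigma0 sigma X w j n = mu i - R (Sm j' n' w) \<or>
               PMw mu0 sigma0 sigma X w j n = mu i + R (Sm j' n' w)" by auto
        thus "Sm j n w = g1 (Sm j' n' w) \<or> Sm j n w = g2 (Sm j' n' w)"
        proof
          assume "PMw mu0 sigma0 sigma X w j n = mu i - R (Sm j' n' w)"
          hence "Sm j n w = (mu i - R (Sm j' n' w) - be j n) / al j n" using True by (intro solve) auto
          thus ?thesis unfolding g1_def by simp
        next
          assume "PMw mu0 sigma0 sigma X w j n = mu i + R (Sm j' n' w)"
          hence "Sm j n w = (mu i + R (Sm j' n' w) - be j n) / al j n" using True by (intro solve) auto
          thus ?thesis unfolding g2_def by simp
        qed
      qed (use True in auto)
      thus ?thesis unfolding v_def v'_def by (rule eventually_mono) blast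
    next
      case False thus ?thesis by (intro AE_I2) auto
    qed
  qed
  have "AE w in M. \<exists>r0. \<forall>r\<ge>r0.
           best \<in> top_set k m (pmeans mu0 sigma0 sigma X w
                                 (aoa_counts k m n0 mu0 sigma0 sigma X pick w r))"
    using A1 A2 A3 A4
  proof eventually_elim
    case (elim w)
    have E1: "\<And>h. h < k \<Longrightarrow> (\<lambda>n. (\<Sum>i<n. X h i w) / real n) \<longlonglongrightarrow> mu h"
      using elim(1) by blast
    have E2: "\<And>h h' n n'. h < k \<Longrightarrow> h' < k \<Longrightarrow> h \<noteq> h' \<Longrightarrow> 1 \<le> n \<Longrightarrow> 1 \<le> n' \<Longrightarrow>
               PMw mu0 sigma0 sigma X w h n \<noteq> PMw mu0 sigma0 sigma X w h' n'"
      using elim(2) by blast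
    have E3: "\<And>h h' n. h < k \<Longrightarrow> h' < k \<Longrightarrow> 1 \<le> n \<Longrightarrow> PMw mu0 sigma0 sigma X w h n \<noteq> mu h'"
      using elim(3) by blast
    have E4: "\<And>i j j' n n'. i < k \<Longrightarrow> j < k \<Longrightarrow> j' < k \<Longrightarrow> j \<noteq> j' \<Longrightarrow> 1 \<le> n \<Longrightarrow> 1 \<le> n' \<Longrightarrow>
               (mu i - PMw mu0 sigma0 sigma X w j n)\<^sup>2 * PVw sigma0 sigma j' n' \<noteq>
               (mu i - PMw mu0 sigma0 sigma X w j' n')\<^sup>2 * PVw sigma0 sigma j n"
      using elim(4) by blast
    interpret det k m n0 mu sigma mu0 sigma0 X pick best w
      by (rule det.intro[OF assms(2,3,4,5,6,7,8,9,10,13) E1 E2 E3 E4])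
    show ?case by (rule eventually_best)
  qed
  thus ?thesis .
qed

end
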